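(* Let $k=\mathbb{Q}(a_1,a_2,a_3,a_4)$ with $a_i$ indeterminates, $P=X^4+a_1X^3+a_2X^2+a_3X+a_4\in k[X]$, and let $Q=b_0X^3+b_1X^2+b_2X+b_3$ be the remainder of the Euclidean division of $P'^2$ by $P$. If $x_1,\dots,x_4$ are the roots of $P$ (in an algebraic closure of $k$), then the three roots of $Q$ are $$\frac{x_1x_2-x_3x_4}{x_1+x_2-x_3-x_4},\quad \frac{x_1x_3-x_2x_4}{x_1+x_3-x_2-x_4},\quad \frac{x_1x_4-x_2x_3}{x_1+x_4-x_2-x_3}.$$
   Context: $P'$ denotes the derivative of $P$ with respect to $X$. *)

theory Defs
  imports "HOL-Computational_Algebra.Polynomial"
begin

text \<open>Four elements a, b, c, d of a field of characteristic 0 are algebraically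
independent over the rationals: no nonzero rational polynomial in four variables
(represented as a nested univariate polynomial, outermost variable for a, innermost
for d) vanishes at (a, b, c, d).\<close>

definition eval4 :: "rat poly poly poly poly \<Rightarrow> 'a::field_char_0 \<Rightarrow> 'a \<Rightarrow> 'a \<Rightarrow> 'a \<Rightarrow> 'a" where
  "eval4 p a b c d =
     poly (map_poly (\<lambda>q. poly (map_poly (\<lambda>r. poly (map_poly (\<lambda>s. poly (map_poly of_rat s) d) r) c) q) b) p) a"

definition alg_indep4 :: "'a::field_char_0 \<Rightarrow> 'a \<Rightarrow> 'a \<Rightarrow> 'a \<Rightarrow> bool" where
  "alg_indep4 a b c d \<longleftrightarrow> (\<forall>p. p \<noteq> 0 \<longrightarrow> eval4 p a b c d \<noteq> 0)"

end

theory Submission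
  imports Defs
begin

lemma div_identity:
  fixes a1 a2 a3 a4 :: "'a::field_char_0"
  shows "(pderiv [:a4, a3, a2, a1, 1:])^2 = [:a1^2, 8*a1, 16:] * [:a4, a3, a2, a1, 1:] +
  [: a3^2 - a1^2*a4, 4*a2*a3 - 8*a1*a4 - a1^2*a3, 4*a2^2 - 16*a4 - 2*a1*a3 - a1^2*a2, -(a1^3) + 4*a1*a2 - 8*a3 :]"
  apply (simp add: pderiv_pCons power2_eq_square)
  apply (simp add: algebra_simps power3_eq_cube)
  done

lemma vieta4:
  fixes a1 a2 a3 a4 x1 x2 x3 x4 :: "'a::field_char_0"
  assumes "[:a4, a3, a2, a1, 1:] = [:-x1, 1:] * [:-x2, 1:] * [:-x3, 1:] * [:-x4, 1:]"
  shows "a1 = -(x1+x2+x3+x4) \<and> a2 = x1*x2+x1*x3+x1*x4+x2*x3+x2*x4+x3*x4 \<and> a3 = -(x1*x2*x3+x1*x2*x4+x1*x3*x4+x2*x3*x4) \<and> a4 = x1*x2*x3*x4"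
  using assms by (simp add: algebra_simps)

lemma indep_b0:
  fixes a1 a2 a3 a4 :: "'a::field_char_0"
  assumes "alg_indep4 a1 a2 a3 a4"
  shows "-(a1^3) + 4*a1*a2 - 8*a3 \<noteq> 0"
proof -
  define p :: "rat poly poly poly poly" where
    "p = [: [:[:0,[:-8:]:]:], [:0,[:[:4:]:]:], 0, [:[:[:-1:]:]:] :]"
  have "p \<noteq> 0" by (simp add: p_def)
  hence "eval4 p a1 a2 a3 a4 \<noteq> 0" using assms by (simp add: alg_indep4_def)
  moreover have "eval4 p a1 a2 a3 a4 = -(a1^3) + 4*a1*a2 - 8*a3"
    by (simp add: p_def eval4_def map_poly_pCons algebra_simps power3_eq_cube)
  ultimately show ?thesis by simp
qed

theorem proposition2:
  fixes a1 a2 a3 a4 x1 x2 x3 x4 :: "'a::field_char_0"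
    and P Q :: "'a poly"
  assumes indep: "alg_indep4 a1 a2 a3 a4"
    and P_def: "P = [:a4, a3, a2, a1, 1:]"
    and Q_def: "Q = (pderiv P)^2 mod P"
    and roots: "P = [:-x1, 1:] * [:-x2, 1:] * [:-x3, 1:] * [:-x4, 1:]"
  shows "degree Q = 3 \<and>
         Q = smult (lead_coeff Q)
               ([:-((x1*x2 - x3*x4) / (x1 + x2 - x3 - x4)), 1:] *
                [:-((x1*x3 - x2*x4) / (x1 + x3 - x2 - x4)), 1:] *
                [:-((x1*x4 - x2*x3) / (x1 + x4 - x2 - x3)), 1:])"
proof -
  define b0 where "b0 = -(a1^3) + 4*a1*a2 - 8*a3"
  define b1 where "b1 = 4*a2^2 - 16*a4 - 2*a1*a3 - a1^2*a2"
  define b2 where "b2 = 4*a2*a3 - 8*a1*a4 - a1^2*a3"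
  define b3 where "b3 = a3^2 - a1^2*a4"
  have b0: "b0 \<noteq> 0" using indep_b0[OF indep] by (simp add: b0_def)
  have degR: "degree [:b3, b2, b1, b0:] = 3" using b0 by simp
  have "Q = [:b3, b2, b1, b0:]"
  proof -
    have "Q = ([:a1^2, 8*a1, 16:] * P + [:b3, b2, b1, b0:]) mod P"
      unfolding Q_def P_def b0_def b1_def b2_def b3_def by (rule arg_cong[OF div_identity])
    also have "\<dots> = [:b3, b2, b1, b0:] mod P" by (rule mod_mult_self3)
    also have "\<dots> = [:b3, b2, b1, b0:]"
      by (rule mod_poly_less) (use degR in \<open>simp add: P_def\<close>)
    finally show ?thesis .
  qed
  note Qe = this
  have v: "a1 = -(x1+x2+x3+x4) \<and> a2 = x1*x2+x1*x3+x1*x4+x2*x3+x2*x4+x3*x4 \<and> a3 = -(x1*x2*x3+x1*x2*x4+x1*x3*x4+x2*x3*x4) \<and> a4 = x1*x2*x3*x4"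
    using vieta4 roots P_def by metis
  then have v1: "a1 = -(x1+x2+x3+x4)" and v2: "a2 = x1*x2+x1*x3+x1*x4+x2*x3+x2*x4+x3*x4"
    and v3: "a3 = -(x1*x2*x3+x1*x2*x4+x1*x3*x4+x2*x3*x4)" and v4: "a4 = x1*x2*x3*x4" by auto
  have b0x: "b0 = (x1 + x2 - x3 - x4) * (x1 + x3 - x2 - x4) * (x1 + x4 - x2 - x3)"
    unfolding b0_def v1 v2 v3 by (simp add: algebra_simps power3_eq_cube)
  have d1: "x1 + x2 - x3 - x4 \<noteq> 0" and d2: "x1 + x3 - x2 - x4 \<noteq> 0" and d3: "x1 + x4 - x2 - x3 \<noteq> 0"
    using b0 b0x by auto
  define n1 where "n1 = x1*x2 - x3*x4"
  define n2 where "n2 = x1*x3 - x2*x4"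
  define n3 where "n3 = x1*x4 - x2*x3"
  define e1 where "e1 = x1 + x2 - x3 - x4"
  define e2 where "e2 = x1 + x3 - x2 - x4"
  define e3 where "e3 = x1 + x4 - x2 - x3"
  have B3: "b3 = - (n1*n2*n3)" unfolding b3_def v1 v3 v4 n1_def n2_def n3_def by algebra
  have B2: "b2 = n1*n2*e3 + n1*n3*e2 + n2*n3*e1"
    unfolding b2_def v1 v2 v3 v4 n1_def n2_def n3_def e1_def e2_def e3_def by algebra
  have B1: "b1 = -(n1*e2*e3 + n2*e1*e3 + n3*e1*e2)"
    unfolding b1_def v1 v2 v3 v4 n1_def n2_def n3_def e1_def e2_def e3_def by algebra
  have B0: "b0 = e1*e2*e3" using b0x e1_def e2_def e3_def by simp
  have "[:b3, b2, b1, b0:] = smult b0 ([:-(n1/e1), 1:] * [:-(n2/e2), 1:] * [:-(n3/e3), 1:])"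
    using d1 d2 d3 unfolding B0 B1 B2 B3 e1_def[symmetric] e2_def[symmetric] e3_def[symmetric]
    by (simp add: field_simps)
  hence "[:b3, b2, b1, b0:] = smult b0
               ([:-((x1*x2 - x3*x4) / (x1 + x2 - x3 - x4)), 1:] *
                [:-((x1*x3 - x2*x4) / (x1 + x3 - x2 - x4)), 1:] *
                [:-((x1*x4 - x2*x3) / (x1 + x4 - x2 - x3)), 1:])"
    by (simp add: n1_def n2_def n3_def e1_def e2_def e3_def)
  note E = this
  have lc: "lead_coeff Q = b0" using Qe degR by (simp add: numeral_3_eq_3)
  have dQ: "degree Q = 3" using Qe degR by simp
  show ?thesis unfolding lc using dQ Qe E by (simp only:)
qed

end
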